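(* Let $G$ be a finite simple graph and $c_0:V(G)\to\mathbb{Z}$ an initial configuration, with $(c_t)_{t\ge0}$ the configurations of the diffusion process. Then $G$ with $c_0$ is tight if and only if there exists $t\geq 0$ such that $c_t$ has property plus.
   Context: Diffusion process: for a configuration $c_t:V(G)\to\mathbb{Z}$ and a vertex $u$, let $\Delta_t^-(u)=|\{w\in N(u): c_t(u)>c_t(w)\}|$, $\Delta_t^+(u)=|\{w\in N(u): c_t(u)<c_t(w)\}|$ and $\Delta_t(u)=\Delta_t^+(u)-\Delta_t^-(u)$. Then $c_{t+1}(u)=c_t(u)+\Delta_t(u)$ for all $u$ simultaneously. The pair $(G,c_0)$ is called tight if the process is eventually fixed or eventually periodic with period length $2$, i.e. there exists $t\geq0$ with $c_{t+2}=c_t$. A configuration $c_i$ has property plus if (1) $c_i(u)+\Delta_i(u)>c_i(v)+\Delta_i(v)$ for every edge $uv$ with $c_i(u)<c_i(v)$, and (2) $c_i(u)+\Delta_i(u)=c_i(v)+\Delta_i(v)$ for every edge $uv$ with $c_i(u)=c_i(v)$. *)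

theory Defs
  imports Main
begin

definition simple_graph :: "'a set \<Rightarrow> ('a \<Rightarrow> 'a \<Rightarrow> bool) \<Rightarrow> bool" where
  "simple_graph V E \<longleftrightarrow> finite V \<and> (\<forall>u v. E u v \<longrightarrow> u \<in> V \<and> v \<in> V)
     \<and> (\<forall>u v. E u v \<longrightarrow> E v u) \<and> (\<forall>u. \<not> E u u)"

definition nbhd :: "'a set \<Rightarrow> ('a \<Rightarrow> 'a \<Rightarrow> bool) \<Rightarrow> 'a \<Rightarrow> 'a set" where
  "nbhd V E u = {w \<in> V. E u w}"

definition delta_minus :: "'a set \<Rightarrow> ('a \<Rightarrow> 'a \<Rightarrow> bool) \<Rightarrow> ('a \<Rightarrow> int) \<Rightarrow> 'a \<Rightarrow> int" where
  "delta_minus V E c u = int (card {w \<in> nbhd V E u. c u > c w})"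

definition delta_plus :: "'a set \<Rightarrow> ('a \<Rightarrow> 'a \<Rightarrow> bool) \<Rightarrow> ('a \<Rightarrow> int) \<Rightarrow> 'a \<Rightarrow> int" where
  "delta_plus V E c u = int (card {w \<in> nbhd V E u. c u < c w})"

definition delta :: "'a set \<Rightarrow> ('a \<Rightarrow> 'a \<Rightarrow> bool) \<Rightarrow> ('a \<Rightarrow> int) \<Rightarrow> 'a \<Rightarrow> int" where
  "delta V E c u = delta_plus V E c u - delta_minus V E c u"

definition diff_step :: "'a set \<Rightarrow> ('a \<Rightarrow> 'a \<Rightarrow> bool) \<Rightarrow> ('a \<Rightarrow> int) \<Rightarrow> ('a \<Rightarrow> int)" where
  "diff_step V E c = (\<lambda>u. c u + delta V E c u)"

definition config :: "'a set \<Rightarrow> ('a \<Rightarrow> 'a \<Rightarrow> bool) \<Rightarrow> ('a \<Rightarrow> int) \<Rightarrow> nat \<Rightarrow> ('a \<Rightarrow> int)" where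
  "config V E c0 t = (diff_step V E ^^ t) c0"

definition tight :: "'a set \<Rightarrow> ('a \<Rightarrow> 'a \<Rightarrow> bool) \<Rightarrow> ('a \<Rightarrow> int) \<Rightarrow> bool" where
  "tight V E c0 \<longleftrightarrow> (\<exists>t. \<forall>u\<in>V. config V E c0 (t + 2) u = config V E c0 t u)"

definition property_plus :: "'a set \<Rightarrow> ('a \<Rightarrow> 'a \<Rightarrow> bool) \<Rightarrow> ('a \<Rightarrow> int) \<Rightarrow> bool" where
  "property_plus V E c \<longleftrightarrow>
     (\<forall>u v. E u v \<longrightarrow> c u < c v \<longrightarrow> c u + delta V E c u > c v + delta V E c v) \<and>
     (\<forall>u v. E u v \<longrightarrow> c u = c v \<longrightarrow> c u + delta V E c u = c v + delta V E c v)"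

end

theory Submission
  imports Defs
begin

lemma card_filter_int:
  assumes "finite A"
  shows "int (card {w\<in>A. P w}) = (\<Sum>w\<in>A. if P w then 1 else 0)"
proof -
  have "int (card {w\<in>A. P w}) = (\<Sum>w\<in>{w\<in>A. P w}. 1)" by simp
  also have "\<dots> = (\<Sum>w\<in>A. if P w then 1 else 0)"
    using sum.inter_filter[OF assms, of "\<lambda>_. (1::int)" P] by simp
  finally show ?thesis .
qed

lemma delta_sgn:
  assumes "finite V"
  shows "delta V E c u = (\<Sum>w\<in>nbhd V E u. sgn (c w - c u))"
proof -
  have fin: "finite (nbhd V E u)" using assms unfolding nbhd_def by simp
  have "delta V E c u = (\<Sum>w\<in>nbhd V E u. (if c u < c w then 1 else 0) - (if c u > c w then 1 else 0))"
    unfolding delta_def delta_plus_def delta_minus_def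
    using card_filter_int[OF fin, of "\<lambda>w. c u < c w"] card_filter_int[OF fin, of "\<lambda>w. c u > c w"]
    by (simp add: sum_subtractf)
  also have "\<dots> = (\<Sum>w\<in>nbhd V E u. sgn (c w - c u))"
    by (rule sum.cong) (auto simp: sgn_if)
  finally show ?thesis .
qed

lemma config_Suc: "config V E c0 (Suc t) = diff_step V E (config V E c0 t)"
  by (simp add: config_def)

lemma double_sum:
  assumes "finite V"
  shows "(\<Sum>u\<in>V. \<Sum>w\<in>nbhd V E u. g u w) = (\<Sum>(u,w)\<in>{(u,w). u\<in>V \<and> w\<in>V \<and> E u w}. g u w)"
proof -
  have fin: "\<forall>u\<in>V. finite (nbhd V E u)" using assms unfolding nbhd_def by simp
  have "Sigma V (nbhd V E) = {(u,w). u\<in>V \<and> w\<in>V \<and> E u w}"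
    unfolding nbhd_def by auto
  with sum.Sigma[OF assms fin, of g] show ?thesis by simp
qed

lemma antisym_sum_zero:
  fixes T :: "'a \<Rightarrow> 'a \<Rightarrow> int" and b :: "'a \<Rightarrow> int"
  assumes fin: "finite P" and sym: "\<And>u w. (u,w) \<in> P \<Longrightarrow> (w,u) \<in> P"
    and anti: "\<And>u w. (u,w) \<in> P \<Longrightarrow> T w u = - T u w"
    and zero: "(\<Sum>(u,w)\<in>P. b u * T u w) = 0"
    and nn: "\<And>u w. (u,w) \<in> P \<Longrightarrow> (b w - b u) * T u w \<ge> 0"
  shows "\<And>u w. (u,w) \<in> P \<Longrightarrow> (b w - b u) * T u w = 0"
proof -
  have swap: "(\<Sum>(u,w)\<in>P. b w * T w u) = (\<Sum>(u,w)\<in>P. b u * T u w)"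
  proof -
    have bij: "bij_betw (\<lambda>(u,w). (w,u)) P P"
      by (rule bij_betw_byWitness[where f'="\<lambda>(u,w). (w,u)"]) (auto intro: sym)
    have "(\<Sum>(u,w)\<in>P. b u * T u w) = (\<Sum>p\<in>P. (\<lambda>(u,w). b u * T u w) ((\<lambda>(u,w). (w,u)) p))"
      using sum.reindex_bij_betw[OF bij, of "\<lambda>(u,w). b u * T u w"] by simp
    also have "\<dots> = (\<Sum>(u,w)\<in>P. b w * T w u)"
      by (rule sum.cong) auto
    finally show ?thesis by simp
  qed
  have "(\<Sum>(u,w)\<in>P. b w * T w u) = (\<Sum>(u,w)\<in>P. - (b w * T u w))"
    by (rule sum.cong) (auto simp: anti)
  hence A: "(\<Sum>(u,w)\<in>P. b w * T u w) = 0"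
    using swap zero by (simp add: sum_negf case_prod_unfold)
  have "(\<Sum>(u,w)\<in>P. (b w - b u) * T u w) = (\<Sum>(u,w)\<in>P. b w * T u w) - (\<Sum>(u,w)\<in>P. b u * T u w)"
    by (simp add: case_prod_unfold sum_subtractf left_diff_distrib)
  hence S: "(\<Sum>(u,w)\<in>P. (b w - b u) * T u w) = 0" using A zero by simp
  have "\<forall>p\<in>P. (\<lambda>(u,w). (b w - b u) * T u w) p = 0"
  proof -
    have "(\<Sum>p\<in>P. (\<lambda>(u,w). (b w - b u) * T u w) p) = 0 \<longleftrightarrow> (\<forall>p\<in>P. (\<lambda>(u,w). (b w - b u) * T u w) p = 0)"
      by (rule sum_nonneg_eq_0_iff[OF fin]) (use nn in auto)
    thus ?thesis using S by simp
  qed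
  thus "\<And>u w. (u,w) \<in> P \<Longrightarrow> (b w - b u) * T u w = 0" by fastforce
qed

theorem theorem14:
  fixes V :: "'a set" and E :: "'a \<Rightarrow> 'a \<Rightarrow> bool" and c0 :: "'a \<Rightarrow> int"
  assumes "simple_graph V E"
  shows "tight V E c0 \<longleftrightarrow> (\<exists>t. property_plus V E (config V E c0 t))"
proof
  have finV: "finite V" and inV: "\<And>u v. E u v \<Longrightarrow> u \<in> V \<and> v \<in> V"
    and symE: "\<And>u v. E u v \<Longrightarrow> E v u"
    using assms unfolding simple_graph_def by auto
  assume "tight V E c0"
  then obtain t where per: "\<forall>u\<in>V. config V E c0 (t + 2) u = config V E c0 t u"
    unfolding tight_def by blast
  define a where "a = config V E c0 t"
  define b where "b = config V E c0 (Suc t)"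
  have ba: "b = diff_step V E a" unfolding a_def b_def by (simp add: config_Suc)
  have ab: "\<forall>u\<in>V. diff_step V E b u = a u"
    using per unfolding a_def b_def by (simp add: config_Suc)
  define T where "T = (\<lambda>u w. sgn (a w - a u) + sgn (b w - b u))"
  define P where "P = {(u,w). u\<in>V \<and> w\<in>V \<and> E u w}"
  have finP: "finite P" unfolding P_def
    by (rule finite_subset[of _ "V \<times> V"]) (auto simp: finV)
  have symP: "\<And>u w. (u,w) \<in> P \<Longrightarrow> (w,u) \<in> P" unfolding P_def using symE by auto
  have antiT: "\<And>u w. T w u = - T u w" unfolding T_def
    by (metis add_uminus_conv_diff minus_add_distrib minus_diff_eq sgn_minus)
  have dsum: "\<forall>u\<in>V. delta V E a u + delta V E b u = 0"
    using ab ba unfolding diff_step_def by (auto dest: fun_cong)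
  have dT: "\<And>u. delta V E a u + delta V E b u = (\<Sum>w\<in>nbhd V E u. T u w)"
    unfolding T_def by (simp add: delta_sgn[OF finV] sum.distrib)
  have zero: "\<And>f. (\<Sum>(u,w)\<in>P. f u * T u w) = 0"
  proof -
    fix f :: "'a \<Rightarrow> int"
    have "(\<Sum>(u,w)\<in>P. f u * T u w) = (\<Sum>u\<in>V. \<Sum>w\<in>nbhd V E u. f u * T u w)"
      unfolding P_def using double_sum[OF finV, of "\<lambda>u w. f u * T u w"] by simp
    also have "\<dots> = (\<Sum>u\<in>V. f u * (delta V E a u + delta V E b u))"
      by (simp add: dT sum_distrib_left)
    also have "\<dots> = 0" using dsum by simp
    finally show "(\<Sum>(u,w)\<in>P. f u * T u w) = 0" .
  qed
  have nn: "\<And>f u w. f = a \<or> f = b \<Longrightarrow> (f w - f u) * T u w \<ge> 0"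
  proof -
    fix f :: "'a \<Rightarrow> int" and u w
    assume "f = a \<or> f = b"
    have g: "\<And>x y::int. x * (sgn x + sgn y) \<ge> 0"
      by (simp add: sgn_if)
    show "(f w - f u) * T u w \<ge> 0"
      using \<open>f = a \<or> f = b\<close> g[of "a w - a u" "b w - b u"] g[of "b w - b u" "a w - a u"]
      unfolding T_def by (auto simp: add.commute)
  qed
  have Za: "\<And>u w. (u,w) \<in> P \<Longrightarrow> (a w - a u) * T u w = 0"
    using antisym_sum_zero[OF finP symP antiT zero[of a]] nn by blast
  have Zb: "\<And>u w. (u,w) \<in> P \<Longrightarrow> (b w - b u) * T u w = 0"
    using antisym_sum_zero[OF finP symP antiT zero[of b]] nn by blast
  have "property_plus V E a"
    unfolding property_plus_def
  proof (intro conjI allI impI)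
    fix u v assume e: "E u v" and lt: "a u < a v"
    have "(u,v) \<in> P" using e inV unfolding P_def by auto
    from Za[OF this] Zb[OF this] lt
    have "b v < b u" unfolding T_def by (auto simp: sgn_if split: if_splits)
    thus "a u + delta V E a u > a v + delta V E a v" using ba unfolding diff_step_def by simp
  next
    fix u v assume e: "E u v" and eq: "a u = a v"
    have "(u,v) \<in> P" using e inV unfolding P_def by auto
    from Zb[OF this] eq
    have "b v = b u" unfolding T_def by (auto simp: sgn_if split: if_splits)
    thus "a u + delta V E a u = a v + delta V E a v" using ba unfolding diff_step_def by simp
  qed
  thus "\<exists>t. property_plus V E (config V E c0 t)" unfolding a_def by blast
next
  have finV: "finite V" and inV: "\<And>u v. E u v \<Longrightarrow> u \<in> V \<and> v \<in> V"
    and symE: "\<And>u v. E u v \<Longrightarrow> E v u"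
    using assms unfolding simple_graph_def by auto
  assume "\<exists>t. property_plus V E (config V E c0 t)"
  then obtain t where pp: "property_plus V E (config V E c0 t)" by blast
  define a where "a = config V E c0 t"
  define b where "b = diff_step V E a"
  have pp1: "\<And>u v. E u v \<Longrightarrow> a u < a v \<Longrightarrow> b u > b v"
    and pp2: "\<And>u v. E u v \<Longrightarrow> a u = a v \<Longrightarrow> b u = b v"
    using pp unfolding property_plus_def a_def[symmetric] b_def diff_step_def by auto
  have sw: "\<And>u w. w \<in> nbhd V E u \<Longrightarrow> sgn (b w - b u) = - sgn (a w - a u)"
  proof -
    fix u w assume "w \<in> nbhd V E u"
    hence e: "E u w" unfolding nbhd_def by simp
    show "sgn (b w - b u) = - sgn (a w - a u)"
    proof (cases "a u < a w")
      case True then show ?thesis using pp1[OF e] by simp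
    next
      case False
      show ?thesis
      proof (cases "a u = a w")
        case True then show ?thesis using pp2[OF e] by simp
      next
        case False
        hence "a w < a u" using \<open>\<not> a u < a w\<close> by simp
        then show ?thesis using pp1[OF symE[OF e]] by simp
      qed
    qed
  qed
  have "\<And>u. delta V E b u = - delta V E a u"
    by (simp add: delta_sgn[OF finV] sw sum_negf)
  hence "\<And>u. diff_step V E b u = a u"
    unfolding b_def diff_step_def by simp
  hence "\<forall>u\<in>V. config V E c0 (t + 2) u = config V E c0 t u"
    unfolding a_def b_def by (simp add: config_Suc)
  thus "tight V E c0" unfolding tight_def by blast
qed

end
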